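(* The subdivision map $\omega:\Xi\to\Xi$, $\omega([(L,v)])=[(\omega(L),v)]$, is injective.
   Context: Combinatorial tiling: 2-dimensional CW-complex homeomorphic to the open unit disk. Decorated subdivision: a decorated pentagon has boundary vertices $v_1,\dots,v_5$ in cyclic order (indices mod 5), corner $v_i$ labelled $i$; $\omega$ adds $m_i$ inside edge $v_iv_{i+1}$, interior vertices $c_1,\dots,c_5$, edges $c_ic_{i+1}$, $c_im_i$, and replaces the face by the central pentagon $c_1\cdots c_5$ (label $i+1$ at $c_i$) and petals $v_i\,m_i\,c_i\,c_{i-1}\,m_{i-1}$ labelled $i,i+1,i+2,i+3,i+4$ (mod 5). $K_0$ is one decorated pentagon, $K_n=\omega^n(K_0)$ embeds label-preservingly onto the central superpentagon $\omega^n(\text{central face of }\omega(K_0))$ of $K_{n+1}$, and $K$ is the direct limit. Isomorphisms are cell-preserving bijections preserving labels. A patch is a finite subcomplex that is a union of faces connected through chains of faces sharing edges. $L$ is locally isomorphic to $K$ if every patch of $L$ is isomorphic to a patch of $K$. $\Xi$ is the set of isomorphism classes $[(L,v)]$ with $L$ locally isomorphic to $K$ and $v$ a vertex of $L$. For such $L$, $\omega(L)$ is obtained by applying $\omega$ to every face of $L$; it is again locally isomorphic to $K$, and each vertex $v$ of $L$ is a vertex of $\omega(L)$. *)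

theory Defs
  imports "HOL-Analysis.Analysis" "HOL-Library.FSet"
begin

datatype lab = l1 | l2 | l3 | l4 | l5

fun nxt :: "lab \<Rightarrow> lab" where
  "nxt l1 = l2" | "nxt l2 = l3" | "nxt l3 = l4" | "nxt l4 = l5" | "nxt l5 = l1"

fun prv :: "lab \<Rightarrow> lab" where
  "prv l1 = l5" | "prv l2 = l1" | "prv l3 = l2" | "prv l4 = l3" | "prv l5 = l4"

fun lab_idx :: "lab \<Rightarrow> nat" where
  "lab_idx l1 = 1" | "lab_idx l2 = 2" | "lab_idx l3 = 3" | "lab_idx l4 = 4" | "lab_idx l5 = 5"

text \<open>A decorated pentagonal face is given by its labelled corners: f i is the corner
  with label i; the boundary cycle is f l1, f l2, ..., f l5 (edges between cyclically
  consecutive labels). A complex is represented by its set of faces; its vertices and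
  edges are those of its faces.\<close>

type_synonym 'v face = "lab \<Rightarrow> 'v"

definition verts :: "'v face set \<Rightarrow> 'v set" where
  "verts F = (\<Union>f\<in>F. range f)"

definition edge :: "'v face \<Rightarrow> lab \<Rightarrow> 'v set" where
  "edge f i = {f i, f (nxt i)}"

definition corner :: "lab \<Rightarrow> complex" where
  "corner i = cis (2 * pi * real (lab_idx i) / 5)"

definition pent :: "complex set" where
  "pent = convex hull (range corner)"

text \<open>A realization: every face f is the image of the standard closed pentagon under an
  embedding psi f sending corner i to the point of vertex f i; shared edges have the same
  image arc; open cells (vertices, open edges, open faces) are pairwise disjoint; the
  space is locally finite (so the subspace topology is the CW topology) and homeomorphic
  to the open unit disk.\<close>

definition tiling :: "'v face set \<Rightarrow> bool" where
  "tiling L \<longleftrightarrow> (\<exists>(pos :: 'v \<Rightarrow> complex) (\<psi> :: 'v face \<Rightarrow> complex \<Rightarrow> complex).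
     inj_on pos (verts L) \<and>
     (\<forall>f\<in>L. continuous_on pent (\<psi> f) \<and> inj_on (\<psi> f) pent \<and>
              (\<forall>i. \<psi> f (corner i) = pos (f i))) \<and>
     (\<forall>f\<in>L. \<forall>g\<in>L. \<forall>i j. edge f i = edge g j \<longrightarrow>
        \<psi> f ` closed_segment (corner i) (corner (nxt i)) =
        \<psi> g ` closed_segment (corner j) (corner (nxt j))) \<and>
     (\<forall>f\<in>L. \<forall>g\<in>L. \<forall>i j. edge f i \<noteq> edge g j \<longrightarrow>
        \<psi> f ` open_segment (corner i) (corner (nxt i)) \<inter>
        \<psi> g ` closed_segment (corner j) (corner (nxt j)) = {}) \<and>
     (\<forall>f\<in>L. \<forall>g\<in>L. f \<noteq> g \<longrightarrow> \<psi> f ` interior pent \<inter> \<psi> g ` pent = {}) \<and>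
     ((\<Union>f\<in>L. \<psi> f ` pent) homeomorphic ball (0::complex) 1) \<and>
     (\<forall>x\<in>(\<Union>f\<in>L. \<psi> f ` pent). \<exists>e>0. finite {f\<in>L. \<psi> f ` pent \<inter> ball x e \<noteq> {}}))"

text \<open>Generic form, with naming functions for old vertices, edge midpoints m_i and centre
  vertices c_i. Central pentagon: c_i carries label i+1. Petal i: v_i, m_i, c_i, c_(i-1),
  m_(i-1) carry labels i, i+1, i+2, i+3, i+4.\<close>

definition petal :: "('v \<Rightarrow> 'w) \<Rightarrow> ('v set \<Rightarrow> 'w) \<Rightarrow> ('v face \<Rightarrow> lab \<Rightarrow> 'w)
    \<Rightarrow> 'v face \<Rightarrow> lab \<Rightarrow> 'w face" where
  "petal old mid cen f i = (\<lambda>j.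
     if j = i then old (f i)
     else if j = nxt i then mid (edge f i)
     else if j = nxt (nxt i) then cen f i
     else if j = nxt (nxt (nxt i)) then cen f (prv i)
     else mid (edge f (prv i)))"

definition omega_face_gen :: "('v \<Rightarrow> 'w) \<Rightarrow> ('v set \<Rightarrow> 'w) \<Rightarrow> ('v face \<Rightarrow> lab \<Rightarrow> 'w)
    \<Rightarrow> 'v face \<Rightarrow> 'w face set" where
  "omega_face_gen old mid cen f =
     insert (\<lambda>j. cen f (prv j)) (range (petal old mid cen f))"

definition omega_gen :: "('v \<Rightarrow> 'w) \<Rightarrow> ('v set \<Rightarrow> 'w) \<Rightarrow> ('v face \<Rightarrow> lab \<Rightarrow> 'w)
    \<Rightarrow> 'v face set \<Rightarrow> 'w face set" where
  "omega_gen old mid cen L = (\<Union>f\<in>L. omega_face_gen old mid cen f)"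

text \<open>Vertices of omega(L): old vertices (so each vertex v of L is the vertex Old v of
  omega(L)), midpoints of edges, and centre vertices of faces.\<close>

datatype 'v svert = Old 'v | Mid "'v set" | Cen "'v face" lab

definition omega :: "'v face set \<Rightarrow> 'v svert face set" where
  "omega L = omega_gen Old Mid Cen L"

section \<open>The tiling K as a direct limit\<close>

datatype uv = U0 lab | UOld uv | UMid "uv fset" | UCen "lab \<Rightarrow> uv" lab

primrec Kn :: "nat \<Rightarrow> uv face set" where
  "Kn 0 = {U0}"
| "Kn (Suc n) = omega_gen UOld (\<lambda>e. UMid (Abs_fset e)) UCen (Kn n)"

text \<open>The label-preserving embedding K_n -> K_(n+1) onto omega^n(central face of omega(K_0)).\<close>

primrec emb :: "uv \<Rightarrow> uv" where
  "emb (U0 j) = UCen U0 (prv j)"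
| "emb (UOld x) = UOld (emb x)"
| "emb (UMid s) = UMid (fimage emb s)"
| "emb (UCen f i) = UCen (emb \<circ> f) i"

definition lim_cls :: "nat \<Rightarrow> uv \<Rightarrow> (nat \<times> uv) set" where
  "lim_cls n x = {(m, y). \<exists>k. (emb ^^ (k + m)) x = (emb ^^ (k + n)) y}"

definition K :: "(nat \<times> uv) set face set" where
  "K = {lim_cls n \<circ> f | n f. f \<in> Kn n}"

definition iso :: "'a face set \<Rightarrow> 'b face set \<Rightarrow> bool" where
  "iso A B \<longleftrightarrow> (\<exists>\<phi>. bij_betw \<phi> (verts A) (verts B) \<and> (\<lambda>f. \<phi> \<circ> f) ` A = B)"

definition piso :: "'a face set \<Rightarrow> 'a \<Rightarrow> 'b face set \<Rightarrow> 'b \<Rightarrow> bool" where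
  "piso A v B w \<longleftrightarrow>
     (\<exists>\<phi>. bij_betw \<phi> (verts A) (verts B) \<and> (\<lambda>f. \<phi> \<circ> f) ` A = B \<and> \<phi> v = w)"

definition share_edge :: "'v face \<Rightarrow> 'v face \<Rightarrow> bool" where
  "share_edge f g \<longleftrightarrow> (\<exists>i j. edge f i = edge g j)"

definition patch :: "'v face set \<Rightarrow> 'v face set \<Rightarrow> bool" where
  "patch L P \<longleftrightarrow> P \<subseteq> L \<and> finite P \<and> P \<noteq> {} \<and>
     (\<forall>f\<in>P. \<forall>g\<in>P. (\<lambda>a b. a \<in> P \<and> b \<in> P \<and> share_edge a b)\<^sup>*\<^sup>* f g)"

definition loc_iso_K :: "'v face set \<Rightarrow> bool" where
  "loc_iso_K L \<longleftrightarrow> (\<forall>P. patch L P \<longrightarrow> (\<exists>Q. patch K Q \<and> iso P Q))"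

definition in_Xi :: "'v face set \<Rightarrow> 'v \<Rightarrow> bool" where
  "in_Xi L v \<longleftrightarrow> tiling L \<and> loc_iso_K L \<and> v \<in> verts L"

end

theory Submission imports Defs begin

lemma UNIV_lab: "(UNIV :: lab set) = {l1,l2,l3,l4,l5}"
  using lab.exhaust by auto

lemma finite_lab[simp]: "finite (A :: lab set)"
  by (metis UNIV_lab finite.emptyI finite.insertI finite_subset subset_UNIV)

definition zz :: complex where "zz = cis (2*pi/5)"

lemma corner_pow: "corner i = zz ^ lab_idx i"
  unfolding corner_def zz_def Complex.DeMoivre by (simp add: field_simps)

lemma zz5: "zz ^ 5 = 1"
  unfolding zz_def Complex.DeMoivre by simp

lemma corner_nxt: "corner (nxt i) = zz * corner i"
proof (cases "i = l5")
  case True then show ?thesis by (simp add: corner_pow zz5)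
next
  case False then show ?thesis by (cases i) (simp_all add: corner_pow numeral_eq_Suc)
qed

lemma norm_zz: "norm zz = 1" by (simp add: zz_def)

lemma corner_norm: "norm (corner i) = 1"
  by (simp add: corner_def)

lemma Re_zz: "Re zz = cos (2*pi/5)" by (simp add: zz_def)

lemma corner_diag: "corner i + corner (nxt (nxt i)) = (2*cos (2*pi/5)) *\<^sub>R corner (nxt i)"
proof -
  have c: "cnj zz * zz = 1" using norm_zz
    by (metis complex_norm_square mult.commute of_real_1 power_one)
  have "corner i = cnj zz * corner (nxt i)" using c by (simp add: corner_nxt)
  moreover have "corner (nxt (nxt i)) = zz * corner (nxt i)" by (simp add: corner_nxt)
  ultimately have "corner i + corner (nxt (nxt i)) = (cnj zz + zz) * corner (nxt i)"
    by (simp add: algebra_simps)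
  also have "cnj zz + zz = of_real (2 * Re zz)"
    by (simp add: complex_eq_iff)
  finally show ?thesis by (simp add: Re_zz scaleR_conv_of_real)
qed

lemma corner_inj: "inj corner"
proof (rule injI)
  fix i j assume "corner i = corner j"
  then have "sin (2*pi*real (lab_idx i)/5) = sin (2*pi*real (lab_idx j)/5) \<and>
             cos (2*pi*real (lab_idx i)/5) = cos (2*pi*real (lab_idx j)/5)"
    by (simp add: corner_def complex_eq_iff)
  then obtain n :: int where n: "2*pi*real (lab_idx i)/5 = 2*pi*real (lab_idx j)/5 + 2*pi*n"
    using sin_cos_eq_iff by blast
  then have "pi * (2*real (lab_idx i)) = pi * (2*(real (lab_idx j) + 5 * n))"
    by (simp add: field_simps)
  then have "real (lab_idx i) = real (lab_idx j) + 5 * n"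
    using pi_gt_zero by simp
  then have e: "int (lab_idx i) = int (lab_idx j) + 5 * n"
    by (metis of_int_eq_iff of_int_add of_int_mult of_int_of_nat_eq of_int_numeral)
  have "lab_idx i \<in> {1..5}" "lab_idx j \<in> {1..5}" by (cases i; simp) (cases j; simp)
  with e have "n = 0" by auto
  with e have "lab_idx i = lab_idx j" by simp
  then show "i = j" by (cases i; cases j; simp)
qed

lemma corner_eq_iff[simp]: "corner i = corner j \<longleftrightarrow> i = j"
  using corner_inj by (auto dest: injD)

lemma noncol:
  fixes a b c :: complex
  assumes "a \<noteq> b" "a \<noteq> c" "b \<noteq> c" "norm a = 1" "norm b = 1" "norm c = 1"
  shows "\<not> collinear {a,b,c}"
proof
  assume "collinear {a,b,c}"
  then have "between (b,c) a \<or> between (c,a) b \<or> between (a,b) c"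
    by (simp add: collinear_between_cases)
  then have "a \<in> open_segment b c \<or> b \<in> open_segment c a \<or> c \<in> open_segment a b"
    using assms by (auto simp: between_mem_segment open_segment_def)
  then show False
    using assms different_norm_3_collinear_points by metis
qed

lemma pent_repr: "pent = {y. \<exists>\<mu>. (\<forall>i. 0 \<le> \<mu> i) \<and> sum \<mu> UNIV = 1 \<and> (\<Sum>i\<in>UNIV. \<mu> i *\<^sub>R corner i) = y}"
proof -
  have r: "sum g (range corner) = sum (g \<circ> corner) UNIV" for g :: "complex \<Rightarrow> 'b::comm_monoid_add"
    by (simp add: sum.reindex corner_inj)
  have "pent = {y. \<exists>u. (\<forall>x\<in>range corner. 0 \<le> u x) \<and> sum u (range corner) = 1 \<and>
         sum (\<lambda>x. u x *\<^sub>R x) (range corner) = y}"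
    unfolding pent_def by (rule convex_hull_finite) simp
  also have "\<dots> = {y. \<exists>\<mu>. (\<forall>i. 0 \<le> \<mu> i) \<and> sum \<mu> UNIV = 1 \<and> (\<Sum>i\<in>UNIV. \<mu> i *\<^sub>R corner i) = y}"
  proof (intro Collect_cong iffI)
    fix y assume "\<exists>u. (\<forall>x\<in>range corner. 0 \<le> u x) \<and> sum u (range corner) = 1 \<and>
         sum (\<lambda>x. u x *\<^sub>R x) (range corner) = y"
    then obtain u where "\<forall>x\<in>range corner. 0 \<le> u x" "sum u (range corner) = 1"
         "sum (\<lambda>x. u x *\<^sub>R x) (range corner) = y" by blast
    then show "\<exists>\<mu>. (\<forall>i. 0 \<le> \<mu> i) \<and> sum \<mu> UNIV = 1 \<and> (\<Sum>i\<in>UNIV. \<mu> i *\<^sub>R corner i) = y"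
      by (intro exI[of _ "u \<circ> corner"]) (simp add: r o_def)
  next
    fix y assume "\<exists>\<mu>. (\<forall>i. 0 \<le> \<mu> i) \<and> sum \<mu> UNIV = 1 \<and> (\<Sum>i\<in>UNIV. \<mu> i *\<^sub>R corner i) = y"
    then obtain \<mu> where m: "\<forall>i. 0 \<le> \<mu> i" "sum \<mu> UNIV = 1" "(\<Sum>i\<in>UNIV. \<mu> i *\<^sub>R corner i) = y" by blast
    have c: "(\<mu> \<circ> inv corner) \<circ> corner = \<mu>" using corner_inj by (simp add: fun_eq_iff)
    show "\<exists>u. (\<forall>x\<in>range corner. 0 \<le> u x) \<and> sum u (range corner) = 1 \<and>
         sum (\<lambda>x. u x *\<^sub>R x) (range corner) = y"
      apply (intro exI[of _ "\<mu> \<circ> inv corner"])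
      using m corner_inj by (simp add: r o_def)
  qed
  finally show ?thesis .
qed

lemma DIM_complex2: "DIM(complex) = 2" by simp

lemma tri_int:
  assumes "p \<noteq> q" "p \<noteq> r" "q \<noteq> r" "0 < a" "0 < b" "0 < c" "a + b + c = 1"
  shows "a *\<^sub>R corner p + b *\<^sub>R corner q + c *\<^sub>R corner r \<in> interior pent"
proof -
  have nc: "\<not> collinear {corner p, corner q, corner r}"
    using assms by (intro noncol) (auto simp: corner_norm)
  have "a *\<^sub>R corner p + b *\<^sub>R corner q + c *\<^sub>R corner r \<in> interior (convex hull {corner p, corner q, corner r})"
    unfolding interior_convex_hull_3_minimal[OF nc DIM_complex2] using assms by blast
  moreover have "interior (convex hull {corner p, corner q, corner r}) \<subseteq> interior pent"
    unfolding pent_def by (intro interior_mono hull_mono) auto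
  ultimately show ?thesis by blast
qed

lemma convex_pent: "convex pent" unfolding pent_def by simp

lemma pos3_int:
  assumes nn: "\<forall>i. 0 \<le> \<mu> i" and s1: "sum \<mu> UNIV = 1"
    and d: "p \<noteq> q" "p \<noteq> r" "q \<noteq> r" and pos: "0 < \<mu> p" "0 < \<mu> q" "0 < \<mu> r"
  shows "(\<Sum>i\<in>UNIV. \<mu> i *\<^sub>R corner i) \<in> interior pent"
proof -
  define s where "s = \<mu> p + \<mu> q + \<mu> r"
  define Rs where "Rs = UNIV - {p,q,r}"
  define T where "T = (\<mu> p / s) *\<^sub>R corner p + (\<mu> q / s) *\<^sub>R corner q + (\<mu> r / s) *\<^sub>R corner r"
  have spos: "0 < s" using pos by (simp add: s_def)
  have "(\<mu> p + \<mu> q + \<mu> r) / s = 1" using spos by (simp add: s_def)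
  then have ss: "\<mu> p / s + \<mu> q / s + \<mu> r / s = 1" by (simp add: add_divide_distrib)
  have T: "T \<in> interior pent" unfolding T_def
    using d pos spos ss by (intro tri_int) auto
  have split: "sum g UNIV = g p + g q + g r + sum g Rs" for g :: "lab \<Rightarrow> 'b::comm_monoid_add"
  proof -
    have "sum g UNIV = sum g {p,q,r} + sum g Rs"
      unfolding Rs_def by (subst sum.subset_diff[of "{p,q,r}"]) (auto simp: add.commute)
    then show ?thesis using d by (simp add: add.assoc)
  qed
  have sR: "sum \<mu> Rs = 1 - s" using s1 split[of \<mu>] by (simp add: s_def)
  have a: "(\<Sum>i\<in>UNIV. \<mu> i *\<^sub>R corner i) = s *\<^sub>R T + (\<Sum>i\<in>Rs. \<mu> i *\<^sub>R corner i)"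
    using split[of "\<lambda>i. \<mu> i *\<^sub>R corner i"] spos by (simp add: T_def scaleR_add_right)
  show ?thesis
  proof (cases "s = 1")
    case True
    then have "\<forall>i\<in>Rs. \<mu> i = 0" using sR nn sum_nonneg_eq_0_iff[of Rs \<mu>] by simp
    then have "(\<Sum>i\<in>Rs. \<mu> i *\<^sub>R corner i) = 0" by simp
    with a True T show ?thesis by simp
  next
    case False
    then have s1': "s < 1" using sR nn sum_nonneg[of Rs \<mu>] by force
    define \<nu> where "\<nu> i = (if i \<in> Rs then \<mu> i / (1 - s) else 0)" for i
    define u where "u = (\<Sum>i\<in>UNIV. \<nu> i *\<^sub>R corner i)"
    have "sum \<nu> UNIV = sum \<nu> Rs" by (rule sum.mono_neutral_right) (auto simp: \<nu>_def)
    also have "\<dots> = sum \<mu> Rs / (1 - s)" by (simp add: \<nu>_def sum_divide_distrib)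
    finally have "sum \<nu> UNIV = 1" using sR s1' by simp
    moreover have "\<forall>i. 0 \<le> \<nu> i" using nn s1' by (simp add: \<nu>_def)
    ultimately have u: "u \<in> pent" unfolding pent_repr u_def by blast
    have "u = (\<Sum>i\<in>Rs. \<nu> i *\<^sub>R corner i)"
      unfolding u_def by (rule sum.mono_neutral_right) (auto simp: \<nu>_def)
    also have "\<dots> = (1 / (1 - s)) *\<^sub>R (\<Sum>i\<in>Rs. \<mu> i *\<^sub>R corner i)"
      by (simp add: scaleR_sum_right \<nu>_def)
    finally have "(\<Sum>i\<in>Rs. \<mu> i *\<^sub>R corner i) = (1 - s) *\<^sub>R u" using s1' by simp
    with a have "(\<Sum>i\<in>UNIV. \<mu> i *\<^sub>R corner i) = u - s *\<^sub>R (u - T)"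
      by (simp add: algebra_simps)
    also have "\<dots> \<in> interior pent"
      using convex_pent T u spos s1' by (intro mem_interior_convex_shrink) auto
    finally show ?thesis .
  qed
qed

lemma zz_ne1: "zz \<noteq> 1"
proof
  assume "zz = 1"
  then have "Im zz = 0" by simp
  moreover have "sin (2*pi/5) > 0" by (rule sin_gt_zero) auto
  ultimately show False by (simp add: zz_def)
qed

lemma sum_corners: "(\<Sum>i\<in>UNIV. corner i) = 0"
proof -
  have "(\<Sum>i\<in>UNIV. corner i) = zz + zz^2 + zz^3 + zz^4 + zz^5"
    by (simp add: UNIV_lab corner_pow)
  moreover have "(zz - 1) * (zz + zz^2 + zz^3 + zz^4 + zz^5) = zz * (zz^5 - 1)"
    by (simp add: algebra_simps numeral_eq_Suc)
  ultimately show ?thesis using zz_ne1 zz5 by simp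
qed

lemma zero_int: "0 \<in> interior pent"
proof -
  have "(\<Sum>i\<in>UNIV. (1/5::real) *\<^sub>R corner i) \<in> interior pent"
    by (rule pos3_int[of _ l1 l2 l3]) (auto simp: UNIV_lab)
  then show ?thesis by (simp add: scaleR_sum_right[symmetric] sum_corners)
qed

lemma corner_in_pent: "corner i \<in> pent"
  unfolding pent_def by (simp add: hull_inc)

lemma aux1: fixes x y M :: "'a::real_vector"
  shows "M = (1/2) *\<^sub>R (x + y) \<Longrightarrow> y - (2*a) *\<^sub>R (y - M) = a *\<^sub>R x + (1 - a) *\<^sub>R y"
  by (simp add: algebra_simps scaleR_diff_left scaleR_add_right flip: scaleR_add_left)

lemma diag_int:
  assumes "0 < a" "0 < b" "a + b = 1"
  shows "a *\<^sub>R corner p + b *\<^sub>R corner (nxt (nxt p)) \<in> interior pent"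
proof -
  define c where "c = cos (2*pi/5)"
  have c0: "0 < c" unfolding c_def using pi_gt_zero by (intro cos_gt_zero_pi; linarith)
  have c1: "c < 1" unfolding c_def
  proof -
    have "cos (2*pi/5) < cos 0" by (rule cos_monotone_0_pi) (use pi_gt_zero in auto)
    then show "cos (2*pi/5) < 1" by simp
  qed
  define M where "M = c *\<^sub>R corner (nxt p)"
  have "corner (nxt p) - (1 - c) *\<^sub>R (corner (nxt p) - 0) \<in> interior pent"
    using c0 c1 by (intro mem_interior_convex_shrink convex_pent zero_int corner_in_pent) auto
  then have M: "M \<in> interior pent" by (simp add: M_def algebra_simps)
  have sumM: "corner p + corner (nxt (nxt p)) = 2 *\<^sub>R M"
    by (simp add: corner_diag M_def c_def)
  show ?thesis
  proof (cases "a \<le> 1/2")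
    case True
    have "corner (nxt (nxt p)) - (2*a) *\<^sub>R (corner (nxt (nxt p)) - M) \<in> interior pent"
      using True assms M by (intro mem_interior_convex_shrink convex_pent corner_in_pent) auto
    moreover have "corner (nxt (nxt p)) - (2*a) *\<^sub>R (corner (nxt (nxt p)) - M)
        = a *\<^sub>R corner p + b *\<^sub>R corner (nxt (nxt p))"
    proof -
      have "M = (1/2) *\<^sub>R (corner p + corner (nxt (nxt p)))" using sumM by simp
      moreover have "b = 1 - a" using assms by simp
      ultimately show ?thesis using aux1[of M "corner p" "corner (nxt (nxt p))" a] by (simp add: add.commute)
    qed
    ultimately show ?thesis by simp
  next
    case False
    have "corner p - (2*b) *\<^sub>R (corner p - M) \<in> interior pent"
      using False assms M by (intro mem_interior_convex_shrink convex_pent corner_in_pent) auto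
    moreover have "corner p - (2*b) *\<^sub>R (corner p - M)
        = a *\<^sub>R corner p + b *\<^sub>R corner (nxt (nxt p))"
    proof -
      have "M = (1/2) *\<^sub>R (corner p + corner (nxt (nxt p)))" using sumM by simp
      moreover have "a = 1 - b" using assms by simp
      ultimately show ?thesis using aux1[of M "corner (nxt (nxt p))" "corner p" b] by (simp add: add.commute)
    qed
    ultimately show ?thesis by simp
  qed
qed

lemma lab_rel: "p \<noteq> q \<Longrightarrow> q = nxt p \<or> p = nxt q \<or> q = nxt (nxt p) \<or> p = nxt (nxt q)"
  by (cases p; cases q; simp)

lemma seg2: "0 \<le> a \<Longrightarrow> 0 \<le> b \<Longrightarrow> a + b = 1 \<Longrightarrow> a *\<^sub>R x + b *\<^sub>R y \<in> closed_segment x y"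
  unfolding in_segment by (rule exI[of _ b]) (auto simp: algebra_simps simp flip: scaleR_add_left)

lemma pent_bdry:
  assumes "a \<in> pent" "a \<notin> interior pent"
  shows "\<exists>i. a \<in> closed_segment (corner i) (corner (nxt i))"
proof -
  obtain \<mu> where nn: "\<forall>i. 0 \<le> \<mu> i" and s1: "sum \<mu> UNIV = 1"
    and a: "a = (\<Sum>i\<in>UNIV. \<mu> i *\<^sub>R corner i)"
    using assms(1) unfolding pent_repr by blast
  have no3: "\<not> (p \<noteq> q \<and> p \<noteq> r \<and> q \<noteq> r \<and> 0 < \<mu> p \<and> 0 < \<mu> q \<and> 0 < \<mu> r)" for p q r
    using pos3_int[OF nn s1, of p q r] assms(2) a by blast
  obtain p where p: "0 < \<mu> p"
  proof (cases "\<exists>p. 0 < \<mu> p")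
    case False then have "\<forall>i. \<mu> i = 0" using nn by (meson not_le order_antisym)
    then show ?thesis using s1 by simp
  qed blast
  show ?thesis
  proof (cases "\<exists>q. q \<noteq> p \<and> 0 < \<mu> q")
    case True
    then obtain q where q: "q \<noteq> p" "0 < \<mu> q" by blast
    have z: "\<mu> i = 0" if "i \<notin> {p,q}" for i
      using no3[of p q i] p q nn that by (metis insertCI order_antisym not_le)
    have "sum \<mu> UNIV = sum \<mu> {p,q}" by (rule sum.mono_neutral_right) (auto simp: z)
    then have pq1: "\<mu> p + \<mu> q = 1" using s1 q by simp
    have "a = (\<Sum>i\<in>{p,q}. \<mu> i *\<^sub>R corner i)" unfolding a
      by (rule sum.mono_neutral_right) (auto simp: z)
    then have a2: "a = \<mu> p *\<^sub>R corner p + \<mu> q *\<^sub>R corner q" using q by simp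
    from lab_rel[of p q] q(1) consider "q = nxt p" | "p = nxt q" | "q = nxt (nxt p)" | "p = nxt (nxt q)"
      by metis
    then show ?thesis
    proof cases
      case 1 then show ?thesis using a2 pq1 p q nn seg2 by metis
    next
      case 2 then show ?thesis using a2 pq1 p q nn seg2 by (metis add.commute)
    next
      case 3 then show ?thesis using diag_int[OF p q(2) pq1] a2 assms(2) by simp
    next
      case 4 then show ?thesis using diag_int[OF q(2) p, of q] pq1 a2 assms(2) by (simp add: add.commute)
    qed
  next
    case False
    then have z: "\<mu> i = 0" if "i \<notin> {p}" for i using nn that by (metis order_antisym not_le singletonI)
    have "sum \<mu> UNIV = sum \<mu> {p}" by (rule sum.mono_neutral_right) (auto simp: z)
    then have "\<mu> p = 1" using s1 by simp
    have "a = (\<Sum>i\<in>{p}. \<mu> i *\<^sub>R corner i)" unfolding a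
      by (rule sum.mono_neutral_right) (auto simp: z)
    then have "a = corner p" using \<open>\<mu> p = 1\<close> by simp
    then show ?thesis by auto
  qed
qed

lemma compact_pent: "compact pent"
  unfolding pent_def by (rule compact_convex_hull) (simp add: finite_imp_compact)

definition share_v :: "'v face set \<Rightarrow> 'v face \<Rightarrow> 'v face \<Rightarrow> bool" where
  "share_v L f g \<longleftrightarrow> f \<in> L \<and> g \<in> L \<and> (\<exists>i j. f i = g j)"

lemma closedin_lf_union:
  fixes \<psi> :: "'v face \<Rightarrow> complex \<Rightarrow> complex"
  assumes cpt: "\<And>f. f \<in> L \<Longrightarrow> compact (\<psi> f ` pent)"
    and lf: "\<forall>x\<in>(\<Union>f\<in>L. \<psi> f ` pent). \<exists>e>0. finite {f\<in>L. \<psi> f ` pent \<inter> ball x e \<noteq> {}}"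
    and F: "F \<subseteq> L"
  shows "closedin (top_of_set (\<Union>f\<in>L. \<psi> f ` pent)) (\<Union>f\<in>F. \<psi> f ` pent)"
  unfolding closedin_limpt
proof (intro conjI allI impI)
  show "(\<Union>f\<in>F. \<psi> f ` pent) \<subseteq> (\<Union>f\<in>L. \<psi> f ` pent)" using F by blast
  fix x assume x: "x islimpt (\<Union>f\<in>F. \<psi> f ` pent) \<and> x \<in> (\<Union>f\<in>L. \<psi> f ` pent)"
  then obtain e where e: "e > 0" and fin: "finite {f\<in>L. \<psi> f ` pent \<inter> ball x e \<noteq> {}}"
    using lf by blast
  define Fi where "Fi = F \<inter> {f\<in>L. \<psi> f ` pent \<inter> ball x e \<noteq> {}}"
  have "finite Fi" using fin by (simp add: Fi_def)
  then have cl: "closed (\<Union>f\<in>Fi. \<psi> f ` pent)"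
    using cpt F by (intro closed_UN) (auto simp: Fi_def intro: compact_imp_closed)
  have "x islimpt (\<Union>f\<in>Fi. \<psi> f ` pent)"
    unfolding islimpt_approachable
  proof (intro allI impI)
    fix d :: real assume "d > 0"
    then obtain y where y: "y \<in> (\<Union>f\<in>F. \<psi> f ` pent)" "y \<noteq> x" "dist y x < min d e"
      using x e unfolding islimpt_approachable by (metis min_less_iff_conj)
    then obtain f where f: "f \<in> F" "y \<in> \<psi> f ` pent" by blast
    have "y \<in> ball x e" using y by (simp add: dist_commute)
    then have "f \<in> Fi" using f F by (auto simp: Fi_def)
    then show "\<exists>y\<in>\<Union>f\<in>Fi. \<psi> f ` pent. y \<noteq> x \<and> dist y x < d"
      using y f by auto
  qed
  then have "x \<in> (\<Union>f\<in>Fi. \<psi> f ` pent)" using cl closed_limpt by blast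
  then show "x \<in> (\<Union>f\<in>F. \<psi> f ` pent)" by (auto simp: Fi_def)
qed

lemma tiling_conn:
  fixes L :: "'v face set"
  assumes "tiling L" "f0 \<in> L" "g \<in> L"
  shows "(share_v L)\<^sup>*\<^sup>* f0 g"
proof -
  obtain pos :: "'v \<Rightarrow> complex" and \<psi> :: "'v face \<Rightarrow> complex \<Rightarrow> complex" where
    inj: "inj_on pos (verts L)" and
    fc: "\<forall>f\<in>L. continuous_on pent (\<psi> f) \<and> inj_on (\<psi> f) pent \<and> (\<forall>i. \<psi> f (corner i) = pos (f i))" and
    e2: "\<forall>f\<in>L. \<forall>g\<in>L. \<forall>i j. edge f i \<noteq> edge g j \<longrightarrow>
        \<psi> f ` open_segment (corner i) (corner (nxt i)) \<inter>
        \<psi> g ` closed_segment (corner j) (corner (nxt j)) = {}" and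
    i1: "\<forall>f\<in>L. \<forall>g\<in>L. f \<noteq> g \<longrightarrow> \<psi> f ` interior pent \<inter> \<psi> g ` pent = {}" and
    hom: "(\<Union>f\<in>L. \<psi> f ` pent) homeomorphic ball (0::complex) 1" and
    lf: "\<forall>x\<in>(\<Union>f\<in>L. \<psi> f ` pent). \<exists>e>0. finite {f\<in>L. \<psi> f ` pent \<inter> ball x e \<noteq> {}}"
    using assms(1) unfolding tiling_def apply (elim exE conjE) apply (rule that) by assumption+
  define U where "U = (\<Union>f\<in>L. \<psi> f ` pent)"
  define S where "S = {g\<in>L. (share_v L)\<^sup>*\<^sup>* f0 g}"
  define A where "A = (\<Union>f\<in>S. \<psi> f ` pent)"
  define B where "B = (\<Union>f\<in>L - S. \<psi> f ` pent)"
  have conn: "connected U" unfolding U_def using homeomorphic_connectedness[OF hom] by simp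
  have cpt: "compact (\<psi> f ` pent)" if "f \<in> L" for f
    using fc that compact_pent by (intro compact_continuous_image) auto
  have cA: "closedin (top_of_set U) A" unfolding U_def A_def
    by (rule closedin_lf_union[OF cpt lf]) (auto simp: S_def)
  have cB: "closedin (top_of_set U) B" unfolding U_def B_def
    by (rule closedin_lf_union[OF cpt lf]) auto
  have AB: "A \<union> B = U" unfolding A_def B_def U_def S_def by blast
  have f0S: "f0 \<in> S" using assms(2) by (simp add: S_def)
  have Ane: "A \<noteq> {}" unfolding A_def using f0S corner_in_pent by blast
  have disj: "A \<inter> B = {}"
  proof (rule ccontr)
    assume "A \<inter> B \<noteq> {}"
    then obtain f a g b where f: "f \<in> S" "a \<in> pent" and g: "g \<in> L" "g \<notin> S" "b \<in> pent"
      and pe: "\<psi> f a = \<psi> g b"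
      unfolding A_def B_def by blast
    have fL: "f \<in> L" using f by (simp add: S_def)
    have fg: "f \<noteq> g" using f g by blast
    have nosh: "f i \<noteq> g j" for i j
    proof
      assume "f i = g j"
      then have "share_v L f g" using fL g by (auto simp: share_v_def)
      then have "(share_v L)\<^sup>*\<^sup>* f0 g" using f by (auto simp: S_def)
      then show False using g by (simp add: S_def)
    qed
    have edne: "edge f i \<noteq> edge g j" for i j
    proof
      assume "edge f i = edge g j"
      then have "f i \<in> {g j, g (nxt j)}" unfolding edge_def by (metis insertI1)
      then show False using nosh by blast
    qed
    have aI: "a \<notin> interior pent"
    proof
      assume "a \<in> interior pent"
      then have "\<psi> f a \<in> \<psi> f ` interior pent \<inter> \<psi> g ` pent" using pe g(3) by (metis IntI image_eqI)
      moreover have "\<psi> f ` interior pent \<inter> \<psi> g ` pent = {}" using i1 fL g(1) fg by auto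
      ultimately show False by auto
    qed
    have bI: "b \<notin> interior pent"
    proof
      assume "b \<in> interior pent"
      then have "\<psi> g b \<in> \<psi> g ` interior pent \<inter> \<psi> f ` pent" using pe f(2) by (metis IntI image_eqI)
      moreover have "\<psi> g ` interior pent \<inter> \<psi> f ` pent = {}" using i1 fL g(1) fg by auto
      ultimately show False by auto
    qed
    obtain i where ai: "a \<in> closed_segment (corner i) (corner (nxt i))" using pent_bdry f(2) aI by blast
    obtain j where bj: "b \<in> closed_segment (corner j) (corner (nxt j))" using pent_bdry g(3) bI by blast
    have "a \<notin> open_segment (corner i) (corner (nxt i))"
    proof
      assume "a \<in> open_segment (corner i) (corner (nxt i))"
      then have "\<psi> f a \<in> \<psi> f ` open_segment (corner i) (corner (nxt i)) \<inter>
        \<psi> g ` closed_segment (corner j) (corner (nxt j))" using bj pe by blast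
      moreover have "\<psi> f ` open_segment (corner i) (corner (nxt i)) \<inter>
        \<psi> g ` closed_segment (corner j) (corner (nxt j)) = {}" using e2 fL g(1) edne by auto
      ultimately show False by auto
    qed
    then obtain i' where ai': "a = corner i'" using ai unfolding open_segment_def by blast
    have "b \<notin> open_segment (corner j) (corner (nxt j))"
    proof
      assume "b \<in> open_segment (corner j) (corner (nxt j))"
      then have "\<psi> g b \<in> \<psi> g ` open_segment (corner j) (corner (nxt j)) \<inter>
        \<psi> f ` closed_segment (corner i) (corner (nxt i))" using ai pe by (metis IntI image_eqI)
      moreover have "\<psi> g ` open_segment (corner j) (corner (nxt j)) \<inter>
        \<psi> f ` closed_segment (corner i) (corner (nxt i)) = {}"
      proof -
        have "edge g j \<noteq> edge f i" using edne[of i j] by metis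
        then show ?thesis using e2 fL g(1) by blast
      qed
      ultimately show False by auto
    qed
    then obtain j' where bj': "b = corner j'" using bj unfolding open_segment_def by blast
    have "pos (f i') = \<psi> f a" using ai' fc fL by auto
    also have "\<dots> = \<psi> g b" by (rule pe)
    also have "\<dots> = pos (g j')" using bj' fc g(1) by auto
    finally have "pos (f i') = pos (g j')" .
    moreover have "f i' \<in> verts L" "g j' \<in> verts L" using fL g by (auto simp: verts_def)
    ultimately have "f i' = g j'" using inj by (meson inj_onD)
    then show False using nosh by blast
  qed
  have "B = {}" using conn[unfolded connected_closedin_eq] cA cB AB disj Ane by auto
  then have "g \<in> S" using assms(3) corner_in_pent unfolding B_def by blast
  then show ?thesis by (simp add: S_def)
qed

abbreviation P :: "'v face \<Rightarrow> lab \<Rightarrow> 'v svert face" where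
  "P \<equiv> petal Old Mid Cen"

lemma omega_mem: "F \<in> omega L \<longleftrightarrow> (\<exists>f\<in>L. F = (\<lambda>j. Cen f (prv j)) \<or> (\<exists>i. F = P f i))"
  unfolding omega_def omega_gen_def omega_face_gen_def by blast

lemma petal_at_i[simp]: "petal old mid cen f i i = old (f i)"
  by (simp add: petal_def)

lemma petal_at_nn[simp]: "petal old mid cen f i (nxt (nxt i)) = cen f i"
  by (cases i) (simp_all add: petal_def)

lemma petal_next_prv[simp]: "petal old mid cen f (nxt i) (prv i) = cen f i"
  by (cases i) (simp_all add: petal_def)

lemma faceOld:
  assumes "F \<in> omega L" "F j = Old y"
  shows "\<exists>g\<in>L. F = P g j"
proof -
  obtain g where g: "g \<in> L" "F = (\<lambda>j. Cen g (prv j)) \<or> (\<exists>i. F = P g i)"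
    using assms(1) unfolding omega_mem by blast
  then obtain i where i: "F = P g i" using assms(2) by auto
  then have "i = j" using assms(2) by (auto simp: petal_def split: if_splits)
  then show ?thesis using g i by blast
qed

lemma faceCen:
  assumes "F \<in> omega L" "F (prv j) = Cen g j"
  shows "F = P g (nxt j)"
proof -
  obtain g' where g: "g' \<in> L" "F = (\<lambda>j. Cen g' (prv j)) \<or> (\<exists>i. F = P g' i)"
    using assms(1) unfolding omega_mem by blast
  show ?thesis
  proof (cases "F = (\<lambda>j. Cen g' (prv j))")
    case True
    then have "Cen g' (prv (prv j)) = Cen g j" using assms(2) by simp
    then show ?thesis by (cases j) auto
  next
    case False
    then obtain i where i: "F = P g' i" using g by blast
    then have "P g' i (prv j) = Cen g j" using assms(2) by simp
    then have "g' = g \<and> i = nxt j"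
      by (cases i; cases j) (simp_all add: petal_def)
    then show ?thesis using i by simp
  qed
qed

lemma lab_cyc: "Q j \<Longrightarrow> (\<And>k. Q k \<Longrightarrow> Q (nxt k)) \<Longrightarrow> Q k"
proof -
  assume a: "Q j" and s: "\<And>k. Q k \<Longrightarrow> Q (nxt k)"
  have "Q (nxt j)" "Q (nxt (nxt j))" "Q (nxt (nxt (nxt j)))" "Q (nxt (nxt (nxt (nxt j))))"
    using a s by blast+
  then show "Q k" using a by (cases j; cases k) simp_all
qed

lemma propag:
  assumes img: "\<forall>F\<in>omega L. \<phi> \<circ> F \<in> omega L'" and f: "f \<in> L"
    and h: "\<phi> (Old (f j)) = Old y"
  shows "\<exists>g\<in>L'. \<forall>k. \<phi> \<circ> P f k = P g k"
proof -
  have inO: "P f k \<in> omega L" for k using f unfolding omega_mem by blast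
  have "(\<phi> \<circ> P f j) j = Old y" using h by simp
  then obtain g where g: "g \<in> L'" "\<phi> \<circ> P f j = P g j"
    using faceOld[of "\<phi> \<circ> P f j" L' j y] img inO by blast
  have "\<phi> \<circ> P f k = P g k" for k
  proof (rule lab_cyc[of "\<lambda>k. \<phi> \<circ> P f k = P g k" j])
    show "\<phi> \<circ> P f j = P g j" by (rule g(2))
  next
    fix k assume k: "\<phi> \<circ> P f k = P g k"
    have "\<phi> (Cen f k) = Cen g k"
      using fun_cong[OF k, of "nxt (nxt k)"] by simp
    then have "(\<phi> \<circ> P f (nxt k)) (prv k) = Cen g k" by simp
    then show "\<phi> \<circ> P f (nxt k) = P g (nxt k)"
      using faceCen img inO by blast
  qed
  then show ?thesis using g by blast
qed

lemma oldpres: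
  assumes t: "tiling L" and v: "v \<in> verts L"
    and img: "\<forall>F\<in>omega L. \<phi> \<circ> F \<in> omega L'" and h: "\<phi> (Old v) = Old v'"
  shows "\<forall>x\<in>verts L. \<exists>y. \<phi> (Old x) = Old y"
proof
  fix x assume "x \<in> verts L"
  then obtain g k where g: "g \<in> L" "x = g k" by (auto simp: verts_def)
  obtain f0 j0 where f0: "f0 \<in> L" "v = f0 j0" using v by (auto simp: verts_def)
  define Good where "Good f \<longleftrightarrow> (\<forall>k::lab. \<exists>y. \<phi> (Old (f k)) = Old y)" for f
  have goodI: "Good f" if fa: "f \<in> L" "\<phi> (Old (f j)) = Old y" for f j y
  proof -
    obtain g' where gg: "\<forall>k. \<phi> \<circ> P f k = P g' k" using propag[OF img fa] by blast
    have "\<phi> (Old (f k)) = Old (g' k)" for k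
    proof -
      have "(\<phi> \<circ> P f k) k = P g' k k" using gg by simp
      then show ?thesis by simp
    qed
    then show ?thesis unfolding Good_def by blast
  qed
  have "(share_v L)\<^sup>*\<^sup>* f0 g" using tiling_conn[OF t f0(1) g(1)] .
  then have "Good g"
  proof (induction rule: rtranclp_induct)
    case base then show ?case using goodI f0 h by blast
  next
    case (step a b)
    then obtain i j where ij: "a i = b j" "b \<in> L" by (auto simp: share_v_def)
    obtain y where "\<phi> (Old (a i)) = Old y" using step.IH unfolding Good_def by blast
    then show ?case using goodI[of b j y] ij by simp
  qed
  then show "\<exists>y. \<phi> (Old x) = Old y" using g unfolding Good_def by blast
qed

lemma old_in_verts: "x \<in> verts L \<Longrightarrow> Old x \<in> verts (omega L)"
proof -
  assume "x \<in> verts L"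
  then obtain f k where f: "f \<in> L" "x = f k" by (auto simp: verts_def)
  then have "P f k \<in> omega L" unfolding omega_mem by blast
  moreover have "P f k k = Old x" using f by simp
  ultimately show ?thesis unfolding verts_def by (metis UN_I rangeI)
qed

lemma face_range_verts: "F \<in> A \<Longrightarrow> F k \<in> verts A"
  by (auto simp: verts_def)

theorem mainTheorem7:
  fixes L :: "'a face set" and v :: 'a and L' :: "'b face set" and v' :: 'b
  assumes "in_Xi L v" and "in_Xi L' v'"
    and "piso (omega L) (Old v) (omega L') (Old v')"
  shows "piso L v L' v'"
proof -
  have tL: "tiling L" and vL: "v \<in> verts L" using assms(1) by (auto simp: in_Xi_def)
  have tL': "tiling L'" and vL': "v' \<in> verts L'" using assms(2) by (auto simp: in_Xi_def)
  obtain \<phi> where bij: "bij_betw \<phi> (verts (omega L)) (verts (omega L'))"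
    and im: "(\<lambda>f. \<phi> \<circ> f) ` omega L = omega L'" and hv: "\<phi> (Old v) = Old v'"
    using assms(3) unfolding piso_def by blast
  have injp: "inj_on \<phi> (verts (omega L))" using bij by (simp add: bij_betw_def)
  define \<phi>' where "\<phi>' = inv_into (verts (omega L)) \<phi>"
  have img: "\<forall>F\<in>omega L. \<phi> \<circ> F \<in> omega L'" using im by blast
  have bk: "\<phi>' \<circ> (\<phi> \<circ> F) = F" if "F \<in> omega L" for F
  proof
    fix k
    have "F k \<in> verts (omega L)" using that by (rule face_range_verts)
    then show "(\<phi>' \<circ> (\<phi> \<circ> F)) k = F k" using injp by (simp add: \<phi>'_def inv_into_f_f)
  qed
  have img': "\<forall>G\<in>omega L'. \<phi>' \<circ> G \<in> omega L"
  proof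
    fix G assume "G \<in> omega L'"
    then obtain F where "F \<in> omega L" "G = \<phi> \<circ> F" using im by blast
    then show "\<phi>' \<circ> G \<in> omega L" using bk by simp
  qed
  have hv': "\<phi>' (Old v') = Old v"
    using hv old_in_verts[OF vL] injp by (metis \<phi>'_def inv_into_f_f)
  have fw: "\<forall>x\<in>verts L. \<exists>y. \<phi> (Old x) = Old y" by (rule oldpres[OF tL vL img hv])
  define \<psi> where "\<psi> x = (SOME y. \<phi> (Old x) = Old y)" for x
  have psi: "\<phi> (Old x) = Old (\<psi> x)" if "x \<in> verts L" for x
    using fw that unfolding \<psi>_def by (metis (mono_tags, lifting) someI_ex)
  have fwd: "\<psi> \<circ> f \<in> L'" if f: "f \<in> L" for f
  proof -
    obtain g where g: "g \<in> L'" "\<forall>k. \<phi> \<circ> P f k = P g k"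
      using propag[OF img f psi[of "f l1"]] f face_range_verts[of f L l1] by blast
    have "\<psi> (f k) = g k" for k
    proof -
      have "(\<phi> \<circ> P f k) k = P g k k" using g by simp
      then have "\<phi> (Old (f k)) = Old (g k)" by simp
      then show ?thesis using psi[of "f k"] f face_range_verts[of f L k] by simp
    qed
    then have "\<psi> \<circ> f = g" by auto
    then show ?thesis using g by simp
  qed
  have bwd: "\<exists>f\<in>L. g = \<psi> \<circ> f" if g: "g \<in> L'" for g
  proof -
    have "\<forall>y\<in>verts L'. \<exists>x. \<phi>' (Old y) = Old x" by (rule oldpres[OF tL' vL' img' hv'])
    then obtain x where x: "\<phi>' (Old (g l1)) = Old x" using g face_range_verts[of g L' l1] by blast
    obtain f where f: "f \<in> L" "\<forall>k. \<phi>' \<circ> P g k = P f k"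
      using propag[OF img' g x] by blast
    have "\<psi> (f k) = g k" for k
    proof -
      have "(\<phi>' \<circ> P g k) k = P f k k" using f by simp
      then have e: "\<phi>' (Old (g k)) = Old (f k)" by simp
      have "Old (g k) \<in> verts (omega L')" by (rule old_in_verts[OF face_range_verts[OF g]])
      then have "Old (g k) \<in> \<phi> ` verts (omega L)" using bij by (simp add: bij_betw_def)
      then have "\<phi> (\<phi>' (Old (g k))) = Old (g k)" by (simp add: \<phi>'_def f_inv_into_f)
      with e have "\<phi> (Old (f k)) = Old (g k)" by simp
      then show ?thesis using psi[of "f k"] f face_range_verts[of f L k] by simp
    qed
    then have "g = \<psi> \<circ> f" by auto
    then show ?thesis using f by blast
  qed
  have faces: "(\<lambda>f. \<psi> \<circ> f) ` L = L'" using fwd bwd by blast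
  have inj: "inj_on \<psi> (verts L)"
  proof
    fix x x' assume xx: "x \<in> verts L" "x' \<in> verts L" "\<psi> x = \<psi> x'"
    then have "\<phi> (Old x) = \<phi> (Old x')" using psi by simp
    then have "Old x = Old x'" using injp old_in_verts xx by (meson inj_onD)
    then show "x = x'" by simp
  qed
  have ran: "\<psi> ` verts L = verts L'"
  proof
    show "\<psi> ` verts L \<subseteq> verts L'"
    proof
      fix y assume "y \<in> \<psi> ` verts L"
      then obtain f k where "f \<in> L" "y = \<psi> (f k)" by (auto simp: verts_def)
      then show "y \<in> verts L'" using fwd[of f] face_range_verts[of "\<psi> \<circ> f" L' k] by simp
    qed
  next
    show "verts L' \<subseteq> \<psi> ` verts L"
    proof
      fix y assume "y \<in> verts L'"
      then obtain g k where g: "g \<in> L'" "y = g k" by (auto simp: verts_def)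
      then obtain f where "f \<in> L" "g = \<psi> \<circ> f" using bwd by blast
      then show "y \<in> \<psi> ` verts L" using g face_range_verts[of f L k] by auto
    qed
  qed
  have "\<psi> v = v'" using psi[OF vL] hv by simp
  then show ?thesis unfolding piso_def bij_betw_def using inj ran faces by blast
qed

end
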